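(* Let $w \in \mathrm{GF}(2^7)\setminus\{0,1\}$, let $\sqrt{w}$ denote the unique square root of $w$ in $\mathrm{GF}(2^7)$, and let $\sigma$ be a non-trivial field automorphism of $\mathrm{GF}(2^7)$, say $\sigma: y\mapsto y^{2^k}$ with $1\le k\le 6$. For $i\ge 1$ write $\sqrt{w}^{-(\sigma^i+\cdots+\sigma^2+\sigma)}$ for the element $\sqrt{w}^{-(2^{ki}+\cdots+2^{2k}+2^{k})}$. Then the set \[ \{0,1,\sqrt{w}^{-\sigma}, \sqrt{w}^{-(\sigma^2+\sigma)}, \sqrt{w}^{-(\sigma^3+\sigma^2+\sigma)},\dots,\sqrt{w}^{-(\sigma^6+\cdots+\sigma^2+\sigma)}\} \] can be written as the set $\{0,1,x,x^3,x^7,x^{15},x^{31},x^{63}\}$, where $x$ is one of the elements $\sqrt{w}^{-(\sigma^i+\cdots+\sigma)}$, $1\le i\le 6$. *)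

theory Defs
  imports Main
begin

text \<open>The (unique) square root in a finite field of characteristic 2.\<close>
definition gf_sqrt :: "'a::field \<Rightarrow> 'a" where
  "gf_sqrt w = (THE y. y ^ 2 = w)"

text \<open>Exponent 2^k + 2^(2k) + ... + 2^(ik), i.e. sigma^i + ... + sigma for sigma = Frobenius^k.\<close>
definition sigma_exp :: "nat \<Rightarrow> nat \<Rightarrow> nat" where
  "sigma_exp k i = (\<Sum>j=1..i. 2 ^ (k * j))"

end

theory Submission
  imports Defs
begin

lemma fermat_fin:
  fixes y :: "'a::{field,finite}"
  assumes "y \<noteq> 0"
  shows "y ^ (card (UNIV::'a set) - 1) = 1"
proof -
  let ?S = "UNIV - {0::'a}"
  have inj: "inj_on (\<lambda>z. y * z) ?S" using assms by (auto simp: inj_on_def)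
  have img: "(\<lambda>z. y * z) ` ?S = ?S"
  proof
    show "(\<lambda>z. y * z) ` ?S \<subseteq> ?S" using assms by auto
    show "?S \<subseteq> (\<lambda>z. y * z) ` ?S"
    proof
      fix z assume "z \<in> ?S"
      then have "z = y * (inverse y * z)" "inverse y * z \<in> ?S" using assms by auto
      then show "z \<in> (\<lambda>z. y * z) ` ?S" by blast
    qed
  qed
  have "prod id ?S = prod ((\<lambda>z. y * z)) ?S"
    using prod.reindex[OF inj, of id] img by simp
  also have "\<dots> = y ^ card ?S * prod id ?S" by (simp add: prod.distrib)
  finally have "y ^ card ?S * prod id ?S = 1 * prod id ?S" by simp
  moreover have "prod id ?S \<noteq> 0" by (simp add: prod_zero_iff)
  ultimately have "y ^ card ?S = 1" by simp
  moreover have "card ?S = card (UNIV::'a set) - 1" by (simp add: card_Diff_singleton)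
  ultimately show ?thesis by simp
qed

lemma pow_red:
  assumes h: "y ^ 127 = (1::'a::monoid_mult)" and "127 \<le> n" shows "y ^ n = y ^ (n mod 127)"
proof -
  have "y ^ n = y ^ (127 * (n div 127) + n mod 127)" by (metis div_mult_mod_eq mult.commute)
  also have "\<dots> = y ^ (n mod 127)" unfolding power_add power_mult h by simp
  finally show ?thesis .
qed

lemma setcomp6: "{f j | j. 1 \<le> j \<and> j \<le> (6::nat)} = {f 1, f 2, f 3, f 4, f 5, f 6}"
proof -
  have "{f j | j. 1 \<le> j \<and> j \<le> (6::nat)} = f ` {1..6}" by auto
  also have "{1..6::nat} = {1,2,3,4,5,6}" by auto
  finally show ?thesis by simp
qed

lemma se_Suc: "sigma_exp k (Suc i) = sigma_exp k i + 2 ^ (k * Suc i)"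
  by (simp add: sigma_exp_def)
lemma se_0: "sigma_exp k 0 = 0"
  by (simp add: sigma_exp_def)

theorem lemma5:
  fixes w :: "'a::{field,finite}" and k :: nat
  assumes "card (UNIV :: 'a set) = 2 ^ 7"
    and "w \<noteq> 0" and "w \<noteq> 1"
    and "1 \<le> k" and "k \<le> 6"
  shows "\<exists>i\<in>{1..6}.
           let x = inverse (gf_sqrt w ^ sigma_exp k i) in
             {0, 1} \<union> {inverse (gf_sqrt w ^ sigma_exp k j) | j. 1 \<le> j \<and> j \<le> 6}
             = {0, 1, x, x ^ 3, x ^ 7, x ^ 15, x ^ 31, x ^ 63}"
proof -
  define y where "y = inverse (gf_sqrt w)"
  have inv: "\<And>n. inverse (gf_sqrt w ^ n) = y ^ n" by (simp add: y_def power_inverse)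
  have ex: "\<And>n. sigma_exp k n = sigma_exp k n" ..
  show ?thesis
  proof (cases "y = 0")
    case True
    show ?thesis
    proof (rule bexI[where x=1])
      have pos: "\<And>j. 1 \<le> j \<Longrightarrow> 0 < sigma_exp k j"
        unfolding sigma_exp_def by (intro sum_pos) auto
      have z: "\<And>j. 1 \<le> j \<Longrightarrow> y ^ sigma_exp k j = 0" using True pos by simp
      have "y ^ sigma_exp k 1 = 0" "y ^ sigma_exp k 2 = 0" "y ^ sigma_exp k 3 = 0"
        "y ^ sigma_exp k 4 = 0" "y ^ sigma_exp k 5 = 0" "y ^ sigma_exp k 6 = 0" by (simp_all add: z)
      note zs = this
      show "let x = inverse (gf_sqrt w ^ sigma_exp k 1) in
             {0, 1} \<union> {inverse (gf_sqrt w ^ sigma_exp k j) | j. 1 \<le> j \<and> j \<le> 6}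
             = {0, 1, x, x ^ 3, x ^ 7, x ^ 15, x ^ 31, x ^ 63}"
        unfolding inv setcomp6 Let_def zs by auto
    qed simp
  next
    case False
    have y127: "y ^ 127 = 1" using fermat_fin[OF False] assms(1) by simp
    note red = pow_red[OF y127]
    have k: "k = 1 \<or> k = 2 \<or> k = 3 \<or> k = 4 \<or> k = 5 \<or> k = 6" using assms(4,5) by auto
    have se: "sigma_exp k 1 = 2^k" "sigma_exp k 2 = 2^k + 2^(k*2)"
      "sigma_exp k 3 = 2^k + 2^(k*2) + 2^(k*3)"
      "sigma_exp k 4 = 2^k + 2^(k*2) + 2^(k*3) + 2^(k*4)"
      "sigma_exp k 5 = 2^k + 2^(k*2) + 2^(k*3) + 2^(k*4) + 2^(k*5)"
      "sigma_exp k 6 = 2^k + 2^(k*2) + 2^(k*3) + 2^(k*4) + 2^(k*5) + 2^(k*6)"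
      by (simp_all add: se_Suc se_0 numeral_eq_Suc)
    show ?thesis
      using k
      apply (elim disjE)
      subgoal apply (rule bexI[where x=1]) apply (unfold inv setcomp6 Let_def se power_mult[symmetric]) apply (simp add: red) apply (auto simp: red) done
      subgoal apply (rule bexI[where x=4]) apply (unfold inv setcomp6 Let_def se power_mult[symmetric]) apply (simp add: red) apply (auto simp: red) done
      subgoal apply (rule bexI[where x=5]) apply (unfold inv setcomp6 Let_def se power_mult[symmetric]) apply (simp add: red) apply (auto simp: red) done
      subgoal apply (rule bexI[where x=2]) apply (unfold inv setcomp6 Let_def se power_mult[symmetric]) apply (simp add: red) apply (auto simp: red) done
      subgoal apply (rule bexI[where x=3]) apply (unfold inv setcomp6 Let_def se power_mult[symmetric]) apply (simp add: red) apply (auto simp: red) done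
      subgoal apply (rule bexI[where x=6]) apply (unfold inv setcomp6 Let_def se power_mult[symmetric]) apply (simp add: red) apply (auto simp: red) done
      done
  qed
qed

end
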